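(* Let $G$ be a graph in which every edge is part of at most two triangles, and for a state $s$ (a $\pm1$ labeling of the edges of $G$) let $P(s)$ be the number of imbalanced triangles of $G$ in $s$. Then $P$ is nonincreasing along the nondeterministic triad dynamics: if $s\rightarrow t$ is a legal transition, then $P(s)\geq P(t)$.
   Context: A triangle is balanced if the product of its three edge labels is $1$, imbalanced otherwise. Nondeterministic triad dynamics: a legal transition consists of choosing an imbalanced triangle $T$ and changing the sign of one edge of $T$. *)

theory Defs
  imports Main
begin

definition simple_graph :: "'a set \<Rightarrow> 'a set set \<Rightarrow> bool" where
  "simple_graph V E \<longleftrightarrow> finite V \<and> (\<forall>e\<in>E. e \<subseteq> V \<and> card e = 2)"

definition tri_edges :: "'a set \<Rightarrow> 'a set set" where
  "tri_edges T = {e. e \<subseteq> T \<and> card e = 2}"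

definition triangles :: "'a set \<Rightarrow> 'a set set \<Rightarrow> 'a set set" where
  "triangles V E = {T. T \<subseteq> V \<and> card T = 3 \<and> tri_edges T \<subseteq> E}"

text \<open>A state is a +-1 labelling of the edges (values off E are irrelevant).\<close>
definition is_state :: "'a set set \<Rightarrow> ('a set \<Rightarrow> int) \<Rightarrow> bool" where
  "is_state E s \<longleftrightarrow> (\<forall>e\<in>E. s e = 1 \<or> s e = -1)"

definition balanced :: "('a set \<Rightarrow> int) \<Rightarrow> 'a set \<Rightarrow> bool" where
  "balanced s T \<longleftrightarrow> (\<Prod>e\<in>tri_edges T. s e) = 1"

definition imbalanced :: "('a set \<Rightarrow> int) \<Rightarrow> 'a set \<Rightarrow> bool" where
  "imbalanced s T \<longleftrightarrow> \<not> balanced s T"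

definition P :: "'a set \<Rightarrow> 'a set set \<Rightarrow> ('a set \<Rightarrow> int) \<Rightarrow> nat" where
  "P V E s = card {T \<in> triangles V E. imbalanced s T}"

definition legal_transition :: "'a set \<Rightarrow> 'a set set \<Rightarrow> ('a set \<Rightarrow> int) \<Rightarrow> ('a set \<Rightarrow> int) \<Rightarrow> bool" where
  "legal_transition V E s t \<longleftrightarrow>
     (\<exists>T\<in>triangles V E. imbalanced s T \<and> (\<exists>e\<in>tri_edges T. t = s(e := - s e)))"

end

theory Submission
  imports Defs
begin

lemma prod_pm1:
  assumes "finite F" "\<forall>x\<in>F. s x = 1 \<or> s x = (-1::int)"
  shows "prod s F = 1 \<or> prod s F = -1"
  using assms
proof (induction F rule: finite_induct)
  case empty then show ?case by simp
next
  case (insert x F) then show ?case by auto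
qed

theorem lemma2:
  fixes V :: "'a set" and E :: "'a set set" and s t :: "'a set \<Rightarrow> int"
  assumes "simple_graph V E"
    and "\<forall>e\<in>E. card {T \<in> triangles V E. e \<subseteq> T} \<le> 2"
    and "is_state E s"
    and "legal_transition V E s t"
  shows "P V E s \<ge> P V E t"
proof -
  let ?A = "triangles V E"
  obtain T0 e where T0: "T0 \<in> ?A" "imbalanced s T0" "e \<in> tri_edges T0" and t: "t = s(e := - s e)"
    using assms(4) unfolding legal_transition_def by blast
  have finA: "finite ?A"
  proof -
    have "?A \<subseteq> Pow V" unfolding triangles_def by auto
    moreover have "finite V" using assms(1) unfolding simple_graph_def by simp
    ultimately show ?thesis by (meson finite_Pow_iff finite_subset)
  qed
  have eE: "e \<in> E" using T0 unfolding triangles_def by auto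
  have esub: "e \<subseteq> T0" using T0(3) unfolding tri_edges_def by auto
  define C where "C = {T \<in> ?A. e \<subseteq> T}"
  define S where "S = {T \<in> ?A. imbalanced s T}"
  define U where "U = {T \<in> ?A. imbalanced t T}"
  have cardC: "card C \<le> 2" using assms(2) eE unfolding C_def by blast
  have finC: "finite C" "finite S" "finite U" using finA unfolding C_def S_def U_def by auto
  have finTE: "finite (tri_edges T)" if "T \<in> ?A" for T
  proof -
    have "card T = 3" using that unfolding triangles_def by auto
    hence "finite T" by (metis card.infinite zero_neq_numeral)
    thus ?thesis unfolding tri_edges_def by (rule rev_finite_subset[OF finite_Pow_iff[THEN iffD2]]) auto
  qed
  have pm: "prod s (tri_edges T) = 1 \<or> prod s (tri_edges T) = -1" if "T \<in> ?A" for T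
    using prod_pm1[OF finTE[OF that]] assms(3) that unfolding is_state_def triangles_def by blast
  have out: "imbalanced t T \<longleftrightarrow> imbalanced s T" if "T \<in> ?A" "T \<notin> C" for T
  proof -
    have "e \<notin> tri_edges T" using that unfolding C_def tri_edges_def by auto
    hence "prod t (tri_edges T) = prod s (tri_edges T)" unfolding t
      by (intro prod.cong) auto
    thus ?thesis unfolding imbalanced_def balanced_def by simp
  qed
  have inn: "imbalanced t T \<longleftrightarrow> \<not> imbalanced s T" if "T \<in> C" for T
  proof -
    have TA: "T \<in> ?A" using that unfolding C_def by auto
    have ein: "e \<in> tri_edges T" using that eE unfolding C_def tri_edges_def triangles_def
      using assms(1) unfolding simple_graph_def by auto
    have "prod t (tri_edges T) = t e * prod t (tri_edges T - {e})"
      using finTE[OF TA] ein by (simp add: prod.remove)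
    also have "prod t (tri_edges T - {e}) = prod s (tri_edges T - {e})" unfolding t
      by (intro prod.cong) auto
    also have "t e * prod s (tri_edges T - {e}) = - (s e * prod s (tri_edges T - {e}))"
      unfolding t by simp
    also have "s e * prod s (tri_edges T - {e}) = prod s (tri_edges T)"
      using finTE[OF TA] ein by (simp add: prod.remove)
    finally have "prod t (tri_edges T) = - prod s (tri_edges T)" .
    thus ?thesis using pm[OF TA] unfolding imbalanced_def balanced_def by auto
  qed
  have U_eq: "U = (S - C) \<union> (C - S)"
    using out inn unfolding U_def S_def C_def by auto
  have T0SC: "T0 \<in> S \<inter> C" using T0 esub unfolding S_def C_def by auto
  have "card U = card (S - C) + card (C - S)"
    unfolding U_eq by (rule card_Un_disjoint) (use finC in auto)
  moreover have "card S = card (S - C) + card (S \<inter> C)"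
    using finC card_Diff_subset_Int[of S C] by (metis Int_lower1 card_Diff_subset card_mono Diff_Diff_Int add_diff_inverse_nat not_less finite_Int card_Un_disjoint Diff_disjoint Int_Diff_Un inf_commute Diff_Int2)
  moreover have "card (C - S) \<le> 1"
  proof -
    have "C - S \<subseteq> C - {T0}" using T0SC by auto
    hence "card (C - S) \<le> card (C - {T0})" using finC by (meson card_mono finite_Diff)
    also have "\<dots> = card C - 1" using T0SC finC by auto
    finally show ?thesis using cardC by linarith
  qed
  moreover have "card (S \<inter> C) \<ge> 1"
    using T0SC finC by (metis One_nat_def Suc_leI card_gt_0_iff empty_iff finite_Int)
  ultimately have "card U \<le> card S" by linarith
  thus ?thesis unfolding P_def U_def S_def by simp
qed

end
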